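(* Let $\mathfrak{A}$ be a $(\circ,\wedge,\mathsf{A})$-algebra and $\theta$ a representation of $\mathfrak{A}$ by partial functions. If $\theta$ is join complete, then $\theta$ is meet complete.
   Context: A $(\circ,\wedge,\mathsf{A})$-algebra is a set with two binary operations $\circ,\wedge$ and one unary operation $\mathsf{A}$. An algebra of partial functions of this signature is a set of partial functions, with base $X$ the union of all their domains and ranges, closed under: composition $f\circ g=\{(x,z)\mid \exists y\,(x,y)\in f,(y,z)\in g\}$; intersection; antidomain $\mathsf{A}(f)=\{(x,x)\mid x\in X, x\notin\mathrm{dom}(f)\}$. A representation by partial functions is an isomorphism onto such an algebra. The order on $\mathfrak{A}$ is $a\le b\iff a\wedge b=a$. A representation $\theta$ is meet complete if for every nonempty $S\subseteq\mathfrak{A}$ such that $\bigwedge S$ exists, $\theta(\bigwedge S)=\bigcap\theta[S]$; it is join complete if for every $S\subseteq\mathfrak{A}$ such that $\bigvee S$ exists, $\theta(\bigvee S)=\bigcup\theta[S]$. *)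

theory Defs
  imports Main
begin

definition base_of :: "('a \<Rightarrow> ('x \<times> 'x) set) \<Rightarrow> 'x set" where
  "base_of \<theta> = (\<Union>a. Domain (\<theta> a) \<union> Range (\<theta> a))"

definition antidom_rel :: "'x set \<Rightarrow> ('x \<times> 'x) set \<Rightarrow> ('x \<times> 'x) set" where
  "antidom_rel X f = {(x, x) | x. x \<in> X \<and> x \<notin> Domain f}"

definition is_pf_representation ::
  "('a \<Rightarrow> 'a \<Rightarrow> 'a) \<Rightarrow> ('a \<Rightarrow> 'a \<Rightarrow> 'a) \<Rightarrow> ('a \<Rightarrow> 'a)
   \<Rightarrow> ('a \<Rightarrow> ('x \<times> 'x) set) \<Rightarrow> bool" where
  "is_pf_representation cmp meet antidom \<theta> \<longleftrightarrow>
     inj \<theta> \<and>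
     (\<forall>a. single_valued (\<theta> a)) \<and>
     (\<forall>a b. \<theta> (cmp a b) = \<theta> a O \<theta> b) \<and>
     (\<forall>a b. \<theta> (meet a b) = \<theta> a \<inter> \<theta> b) \<and>
     (\<forall>a. \<theta> (antidom a) = antidom_rel (base_of \<theta>) (\<theta> a))"

definition alg_le :: "('a \<Rightarrow> 'a \<Rightarrow> 'a) \<Rightarrow> 'a \<Rightarrow> 'a \<Rightarrow> bool" where
  "alg_le meet a b \<longleftrightarrow> meet a b = a"

definition is_alg_join :: "('a \<Rightarrow> 'a \<Rightarrow> 'a) \<Rightarrow> 'a set \<Rightarrow> 'a \<Rightarrow> bool" where
  "is_alg_join meet S j \<longleftrightarrow> (\<forall>s\<in>S. alg_le meet s j) \<and>
     (\<forall>u. (\<forall>s\<in>S. alg_le meet s u) \<longrightarrow> alg_le meet j u)"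

definition is_alg_meet :: "('a \<Rightarrow> 'a \<Rightarrow> 'a) \<Rightarrow> 'a set \<Rightarrow> 'a \<Rightarrow> bool" where
  "is_alg_meet meet S m \<longleftrightarrow> (\<forall>s\<in>S. alg_le meet m s) \<and>
     (\<forall>l. (\<forall>s\<in>S. alg_le meet l s) \<longrightarrow> alg_le meet l m)"

definition join_complete :: "('a \<Rightarrow> 'a \<Rightarrow> 'a) \<Rightarrow> ('a \<Rightarrow> ('x \<times> 'x) set) \<Rightarrow> bool" where
  "join_complete meet \<theta> \<longleftrightarrow>
     (\<forall>S j. is_alg_join meet S j \<longrightarrow> \<theta> j = \<Union> (\<theta> ` S))"

definition meet_complete :: "('a \<Rightarrow> 'a \<Rightarrow> 'a) \<Rightarrow> ('a \<Rightarrow> ('x \<times> 'x) set) \<Rightarrow> bool" where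
  "meet_complete meet \<theta> \<longleftrightarrow>
     (\<forall>S m. S \<noteq> {} \<and> is_alg_meet meet S m \<longrightarrow> \<theta> m = \<Inter> (\<theta> ` S))"

end

theory Submission
  imports Defs
begin

theorem mainTheorem3:
  fixes cmp meet :: "'a \<Rightarrow> 'a \<Rightarrow> 'a" and antidom :: "'a \<Rightarrow> 'a"
    and \<theta> :: "'a \<Rightarrow> ('x \<times> 'x) set"
  assumes "is_pf_representation cmp meet antidom \<theta>"
    and "join_complete meet \<theta>"
  shows "meet_complete meet \<theta>"
proof -
  define X where "X = base_of \<theta>"
  have inj: "inj \<theta>" and sv: "\<And>a. single_valued (\<theta> a)"
    and hc: "\<And>a b. \<theta> (cmp a b) = \<theta> a O \<theta> b"
    and hm: "\<And>a b. \<theta> (meet a b) = \<theta> a \<inter> \<theta> b"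
    and ha: "\<And>a. \<theta> (antidom a) = antidom_rel X (\<theta> a)"
    using assms(1) unfolding is_pf_representation_def X_def by auto
  have le: "\<And>a b. alg_le meet a b \<longleftrightarrow> \<theta> a \<subseteq> \<theta> b"
  proof -
    fix a b
    have "alg_le meet a b \<longleftrightarrow> \<theta> (meet a b) = \<theta> a"
      unfolding alg_le_def using inj by (metis injD)
    thus "alg_le meet a b \<longleftrightarrow> \<theta> a \<subseteq> \<theta> b" using hm by auto
  qed
  have dom: "\<And>a p q. (p, q) \<in> \<theta> a \<Longrightarrow> p \<in> X \<and> q \<in> X"
    unfolding X_def base_of_def by blast
  have ad: "\<And>a p q. (p, q) \<in> \<theta> (antidom a) \<longleftrightarrow> p = q \<and> p \<in> X \<and> p \<notin> Domain (\<theta> a)"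
    using ha unfolding antidom_rel_def by auto
  show ?thesis unfolding meet_complete_def
  proof (intro allI impI)
    fix S m assume "S \<noteq> {} \<and> is_alg_meet meet S m"
    then obtain s0 where s0: "s0 \<in> S" and mm: "is_alg_meet meet S m" by auto
    have mlow: "\<And>s. s \<in> S \<Longrightarrow> \<theta> m \<subseteq> \<theta> s" using mm le unfolding is_alg_meet_def by auto
    have mgr: "\<And>l. (\<And>s. s \<in> S \<Longrightarrow> \<theta> l \<subseteq> \<theta> s) \<Longrightarrow> \<theta> l \<subseteq> \<theta> m"
      using mm le unfolding is_alg_meet_def by auto
    define zero where "zero = cmp (antidom s0) s0"
    define I where "I = antidom zero"
    have tz: "\<theta> zero = {}" unfolding zero_def hc using ad by auto
    have tI: "\<And>p q. (p,q) \<in> \<theta> I \<longleftrightarrow> p = q \<and> p \<in> X" unfolding I_def using ad tz by auto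
    define D where "D = (\<lambda>s. antidom (meet s0 s)) ` S"
    have join: "is_alg_join meet D (antidom m)"
      unfolding is_alg_join_def
    proof (intro conjI ballI allI impI)
      fix d assume "d \<in> D"
      then obtain s where s: "s \<in> S" and d: "d = antidom (meet s0 s)" unfolding D_def by auto
      have "Domain (\<theta> m) \<subseteq> Domain (\<theta> (meet s0 s))"
        using mlow[OF s] mlow[OF s0] hm by (metis Domain_mono Int_greatest)
      thus "alg_le meet d (antidom m)" unfolding le d using ad by (auto simp del: Domain_Int_subset) blast
    next
      fix u assume ub: "\<forall>d\<in>D. alg_le meet d u"
      have ub': "\<And>s p. s \<in> S \<Longrightarrow> p \<in> X \<Longrightarrow> p \<notin> Domain (\<theta> s0 \<inter> \<theta> s) \<Longrightarrow> (p,p) \<in> \<theta> u"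
      proof -
        fix s p assume "s \<in> S" "p \<in> X" "p \<notin> Domain (\<theta> s0 \<inter> \<theta> s)"
        hence "(p,p) \<in> \<theta> (antidom (meet s0 s))" using ad hm by auto
        moreover have "antidom (meet s0 s) \<in> D" using \<open>s \<in> S\<close> unfolding D_def by auto
        ultimately show "(p,p) \<in> \<theta> u" using ub le by auto
      qed
      define r where "r = cmp (antidom (meet u I)) s0"
      have tr: "\<And>p q. (p,q) \<in> \<theta> r \<longleftrightarrow> p \<in> X \<and> (p,p) \<notin> \<theta> u \<and> (p,q) \<in> \<theta> s0"
      proof -
        fix p q
        have dI: "\<And>p. p \<in> Domain (\<theta> (meet u I)) \<longleftrightarrow> (p,p) \<in> \<theta> u \<and> p \<in> X"
          using hm tI by auto
        have "(p,q) \<in> \<theta> r \<longleftrightarrow> (\<exists>w. (p,w) \<in> \<theta> (antidom (meet u I)) \<and> (w,q) \<in> \<theta> s0)"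
          unfolding r_def hc by auto
        also have "\<dots> \<longleftrightarrow> p \<in> X \<and> (p,p) \<notin> \<theta> u \<and> (p,q) \<in> \<theta> s0"
          using ad dI by auto
        finally show "(p,q) \<in> \<theta> r \<longleftrightarrow> p \<in> X \<and> (p,p) \<notin> \<theta> u \<and> (p,q) \<in> \<theta> s0" .
      qed
      have "\<theta> r \<subseteq> \<theta> m"
      proof (rule mgr)
        fix s assume s: "s \<in> S"
        show "\<theta> r \<subseteq> \<theta> s"
        proof
          fix pq assume "pq \<in> \<theta> r"
          then obtain p q where pq: "pq = (p,q)" and "p \<in> X" "(p,p) \<notin> \<theta> u" "(p,q) \<in> \<theta> s0"
            using tr by (cases pq) auto
          show "pq \<in> \<theta> s"
          proof (rule ccontr)
            assume "pq \<notin> \<theta> s"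
            hence "p \<notin> Domain (\<theta> s0 \<inter> \<theta> s)"
              using sv[of s0] \<open>(p,q) \<in> \<theta> s0\<close> pq unfolding single_valued_def by auto
            thus False using ub' s \<open>p \<in> X\<close> \<open>(p,p) \<notin> \<theta> u\<close> by auto
          qed
        qed
      qed
      show "alg_le meet (antidom m) u" unfolding le
      proof
        fix pq assume "pq \<in> \<theta> (antidom m)"
        then obtain p where pq: "pq = (p,p)" and pX: "p \<in> X" and pn: "p \<notin> Domain (\<theta> m)"
          using ad by (cases pq) auto
        show "pq \<in> \<theta> u"
        proof (rule ccontr)
          assume nu: "pq \<notin> \<theta> u"
          show False
          proof (cases "p \<in> Domain (\<theta> s0)")
            case True
            then obtain q where "(p,q) \<in> \<theta> s0" by auto
            hence "(p,q) \<in> \<theta> r" using tr pX nu pq by auto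
            thus False using \<open>\<theta> r \<subseteq> \<theta> m\<close> pn by auto
          next
            case False
            thus False using ub'[OF s0 pX] nu pq by auto
          qed
        qed
      qed
    qed
    hence eq: "\<theta> (antidom m) = \<Union> (\<theta> ` D)" using assms(2) unfolding join_complete_def by auto
    show "\<theta> m = \<Inter> (\<theta> ` S)"
    proof
      show "\<theta> m \<subseteq> \<Inter> (\<theta> ` S)" using mlow by auto
    next
      show "\<Inter> (\<theta> ` S) \<subseteq> \<theta> m"
      proof
        fix pq assume a: "pq \<in> \<Inter> (\<theta> ` S)"
        then obtain p q where pq: "pq = (p,q)" by (cases pq)
        have all: "\<And>s. s \<in> S \<Longrightarrow> (p,q) \<in> \<theta> s" using a pq by auto
        have pX: "p \<in> X" using dom all[OF s0] by auto
        have "p \<in> Domain (\<theta> m)"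
        proof (rule ccontr)
          assume "p \<notin> Domain (\<theta> m)"
          hence "(p,p) \<in> \<theta> (antidom m)" using ad pX by auto
          then obtain s where s: "s \<in> S" and "(p,p) \<in> \<theta> (antidom (meet s0 s))"
            unfolding eq D_def by auto
          hence "p \<notin> Domain (\<theta> s0 \<inter> \<theta> s)" using ad hm by auto
          thus False using all[OF s] all[OF s0] by auto
        qed
        then obtain z where z: "(p,z) \<in> \<theta> m" by auto
        hence "(p,z) \<in> \<theta> s0" using mlow[OF s0] by auto
        hence "z = q" using all[OF s0] sv[of s0] unfolding single_valued_def by auto
        thus "pq \<in> \<theta> m" using z pq by auto
      qed
    qed
  qed
qed

end
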